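(* Let $S$ be an $\omega$-cocontinuous $M$-module. For all $M$-wGCL programs $C$, the transformer $\mathsf{wlp}[C]$ is a well-defined $\omega$-cocontinuous endofunction on the module of weightings over $S$. In particular, if $\Phi_f$ is the $\mathsf{wlp}$-characteristic function of $\mathtt{while}(\varphi)\{C\}$ with respect to postweighting $f$, i.e.\ $\Phi_f(X) = [\neg\varphi]\cdot f \oplus [\varphi]\cdot \mathsf{wlp}[C](X)$, then \[ \mathsf{wlp}[\mathtt{while}(\varphi)\{C\}](f) \;=\; \bigwedge_{i \in \mathbb{N}} \Phi_f^i(\top), \] where $\bigwedge$ denotes the infimum (meet) with respect to the natural order and $\top$ is the greatest element of the module of weightings.
   Context: $M=(M,\odot,1)$ is a monoid of weights. An $M$-module $S$ is a commutative monoid $(S,\oplus,\mathbf{0})$ with an associative, distributive left action (scalar multiplication) $\otimes\colon M\times S\to S$ such that $1\otimes a=a$ and $v\otimes\mathbf{0}=\mathbf{0}$. The natural order is $a\preceq b$ iff $\exists c:\ a\oplus c=b$. $S$ is $\omega$-cocontinuous if the reversed natural order is a pointed $\omega$-cpo (so a greatest element $\top$ exists and infima of decreasing chains exist) and $\oplus$, $\otimes$ are $\omega$-continuous with respect to it. Weightings are functions $f\colon\Sigma\to S$ from program states to $S$, with operations, order, $\top$ and meets lifted pointwise. wGCL programs are built from assignments $x:=E$, sequential composition $C_1;C_2$, conditionals $\mathtt{if}(\varphi)\{C_1\}\mathtt{else}\{C_2\}$, branching $\{C_1\}\oplus\{C_2\}$, weighting statements $\odot a$ with $a\in M$, and loops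 $\mathtt{while}(\varphi)\{C\}$. For a predicate $\varphi$, $([\varphi]\cdot f)(\sigma)=f(\sigma)$ if $\sigma\models\varphi$ and $\mathbf{0}$ otherwise. The weakest liberal preweighting transformer $\mathsf{wlp}$ is defined inductively: $\mathsf{wlp}[x:=E](f)=f[x/E]$; $\mathsf{wlp}[C_1;C_2](f)=\mathsf{wlp}[C_1](\mathsf{wlp}[C_2](f))$; $\mathsf{wlp}[\mathtt{if}(\varphi)\{C_1\}\mathtt{else}\{C_2\}](f)=[\varphi]\cdot\mathsf{wlp}[C_1](f)\oplus[\neg\varphi]\cdot\mathsf{wlp}[C_2](f)$; $\mathsf{wlp}[\{C_1\}\oplus\{C_2\}](f)=\mathsf{wlp}[C_1](f)\oplus\mathsf{wlp}[C_2](f)$; $\mathsf{wlp}[\odot a](f)=a\otimes f$; and $\mathsf{wlp}[\mathtt{while}(\varphi)\{C\}](f)$ is the greatest fixed point of $\Phi_f$. *)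

theory Defs
  imports Main
begin

text \<open>Monoid of weights: type class monoid_mult (product = weight multiplication, 1 = unit).
  Module carrier: type class comm_monoid_add (+ = oplus, 0 = zero); the scalar action is a parameter.\<close>

definition is_module :: "('m::monoid_mult \<Rightarrow> 's::comm_monoid_add \<Rightarrow> 's) \<Rightarrow> bool" where
  "is_module act \<longleftrightarrow>
     (\<forall>a. act 1 a = a) \<and>
     (\<forall>v w a. act (v * w) a = act v (act w a)) \<and>
     (\<forall>v a b. act v (a + b) = act v a + act v b) \<and>
     (\<forall>v. act v 0 = 0)"

definition nle :: "'s::comm_monoid_add \<Rightarrow> 's \<Rightarrow> bool" where
  "nle a b \<longleftrightarrow> (\<exists>c. a + c = b)"

definition is_inf :: "('a \<Rightarrow> 'a \<Rightarrow> bool) \<Rightarrow> 'a set \<Rightarrow> 'a \<Rightarrow> bool" where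
  "is_inf le A x \<longleftrightarrow> (\<forall>a\<in>A. le x a) \<and> (\<forall>y. (\<forall>a\<in>A. le y a) \<longrightarrow> le y x)"

definition decreasing :: "('a \<Rightarrow> 'a \<Rightarrow> bool) \<Rightarrow> (nat \<Rightarrow> 'a) \<Rightarrow> bool" where
  "decreasing le s \<longleftrightarrow> (\<forall>i. le (s (Suc i)) (s i))"

definition omega_cocont :: "('a \<Rightarrow> 'a \<Rightarrow> bool) \<Rightarrow> ('b \<Rightarrow> 'b \<Rightarrow> bool) \<Rightarrow> ('a \<Rightarrow> 'b) \<Rightarrow> bool" where
  "omega_cocont le1 le2 F \<longleftrightarrow>
     (\<forall>s x. decreasing le1 s \<longrightarrow> is_inf le1 (range s) x \<longrightarrow> is_inf le2 (range (\<lambda>i. F (s i))) (F x))"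

text \<open>S is an omega-cocontinuous M-module: reversed natural order is a pointed omega-cpo
  (partial order, greatest element, infima of decreasing chains), and oplus, otimes are
  omega-continuous w.r.t. it (oplus jointly in both arguments, otimes in its module argument).\<close>
definition omega_cocontinuous_module :: "('m::monoid_mult \<Rightarrow> 's::comm_monoid_add \<Rightarrow> 's) \<Rightarrow> bool" where
  "omega_cocontinuous_module (act :: 'm \<Rightarrow> 's \<Rightarrow> 's) \<longleftrightarrow>
     (\<forall>a b :: 's. nle a b \<longrightarrow> nle b a \<longrightarrow> a = b) \<and>
     (\<exists>t :: 's. \<forall>a. nle a t) \<and>
     (\<forall>s :: nat \<Rightarrow> 's. decreasing nle s \<longrightarrow> (\<exists>x. is_inf nle (range s) x)) \<and>
     (\<forall>(s :: nat \<Rightarrow> 's) t x y. decreasing nle s \<longrightarrow> decreasing nle t \<longrightarrow>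
         is_inf nle (range s) x \<longrightarrow> is_inf nle (range t) y \<longrightarrow>
         is_inf nle (range (\<lambda>i. s i + t i)) (x + y)) \<and>
     (\<forall>v. omega_cocont nle nle (act v))"

definition ntop :: "'s::comm_monoid_add" where
  "ntop = (THE t. \<forall>a. nle a t)"

definition wle :: "('st \<Rightarrow> 's::comm_monoid_add) \<Rightarrow> ('st \<Rightarrow> 's) \<Rightarrow> bool" where
  "wle f g \<longleftrightarrow> (\<forall>\<sigma>. nle (f \<sigma>) (g \<sigma>))"

definition wtop :: "'st \<Rightarrow> 's::comm_monoid_add" where
  "wtop = (\<lambda>\<sigma>. ntop)"

definition is_gfp :: "('a \<Rightarrow> 'a \<Rightarrow> bool) \<Rightarrow> ('a \<Rightarrow> 'a) \<Rightarrow> 'a \<Rightarrow> bool" where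
  "is_gfp le F x \<longleftrightarrow> F x = x \<and> (\<forall>y. F y = y \<longrightarrow> le y x)"

definition gfp_w :: "(('st \<Rightarrow> 's::comm_monoid_add) \<Rightarrow> ('st \<Rightarrow> 's)) \<Rightarrow> ('st \<Rightarrow> 's)" where
  "gfp_w F = (THE x. is_gfp wle F x)"

type_synonym ('v, 'val) state = "'v \<Rightarrow> 'val"

datatype ('v, 'val, 'm) wgcl =
    Assign 'v "('v, 'val) state \<Rightarrow> 'val"
  | Seq "('v, 'val, 'm) wgcl" "('v, 'val, 'm) wgcl"
  | Ite "('v, 'val) state \<Rightarrow> bool" "('v, 'val, 'm) wgcl" "('v, 'val, 'm) wgcl"
  | Branch "('v, 'val, 'm) wgcl" "('v, 'val, 'm) wgcl"
  | Weight 'm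
  | While "('v, 'val) state \<Rightarrow> bool" "('v, 'val, 'm) wgcl"

definition guard :: "('st \<Rightarrow> bool) \<Rightarrow> ('st \<Rightarrow> 's::comm_monoid_add) \<Rightarrow> 'st \<Rightarrow> 's" where
  "guard P f = (\<lambda>\<sigma>. if P \<sigma> then f \<sigma> else 0)"

primrec wlp :: "('m::monoid_mult \<Rightarrow> 's::comm_monoid_add \<Rightarrow> 's) \<Rightarrow> ('v, 'val, 'm) wgcl
    \<Rightarrow> (('v, 'val) state \<Rightarrow> 's) \<Rightarrow> (('v, 'val) state \<Rightarrow> 's)" where
  "wlp act (Assign x E) f = (\<lambda>\<sigma>. f (\<sigma>(x := E \<sigma>)))"
| "wlp act (Seq C1 C2) f = wlp act C1 (wlp act C2 f)"
| "wlp act (Ite P C1 C2) f = (\<lambda>\<sigma>. guard P (wlp act C1 f) \<sigma> + guard (\<lambda>\<tau>. \<not> P \<tau>) (wlp act C2 f) \<sigma>)"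
| "wlp act (Branch C1 C2) f = (\<lambda>\<sigma>. wlp act C1 f \<sigma> + wlp act C2 f \<sigma>)"
| "wlp act (Weight a) f = (\<lambda>\<sigma>. act a (f \<sigma>))"
| "wlp act (While P C) f =
     gfp_w (\<lambda>X \<sigma>. guard (\<lambda>\<tau>. \<not> P \<tau>) f \<sigma> + guard P (wlp act C X) \<sigma>)"

definition wlp_char :: "('m::monoid_mult \<Rightarrow> 's::comm_monoid_add \<Rightarrow> 's) \<Rightarrow> (('v, 'val) state \<Rightarrow> bool)
    \<Rightarrow> ('v, 'val, 'm) wgcl \<Rightarrow> (('v, 'val) state \<Rightarrow> 's) \<Rightarrow> (('v, 'val) state \<Rightarrow> 's) \<Rightarrow> (('v, 'val) state \<Rightarrow> 's)" where
  "wlp_char act P C f X = (\<lambda>\<sigma>. guard (\<lambda>\<tau>. \<not> P \<tau>) f \<sigma> + guard P (wlp act C X) \<sigma>)"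

end

theory Submission
  imports Defs
begin

lemma nle_refl: "nle a a" unfolding nle_def by (rule exI[of _ 0]) simp
lemma nle_trans: "nle a b \<Longrightarrow> nle b c \<Longrightarrow> nle a c" unfolding nle_def by (metis add.assoc)
lemma nle_zero: "nle 0 a" by (simp add: nle_def)
lemma nle_add: "nle a b \<Longrightarrow> nle c d \<Longrightarrow> nle (a+c) (b+d)"
  unfolding nle_def by (metis add.assoc add.commute)

lemma is_inf_range: "is_inf le (range s) x \<longleftrightarrow> (\<forall>i. le x (s i)) \<and> (\<forall>y. (\<forall>i. le y (s i)) \<longrightarrow> le y x)"
  by (simp add: is_inf_def)

lemma wle_refl: "wle f f" by (simp add: wle_def nle_refl)
lemma wle_trans: "wle f g \<Longrightarrow> wle g h \<Longrightarrow> wle f h" unfolding wle_def by (metis nle_trans)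

lemma cocont_mono:
  assumes refl: "\<And>a. le a a" and c: "omega_cocont le le2 F" and ab: "le a b"
  shows "le2 (F a) (F b)"
proof -
  define s where "s = (\<lambda>i::nat. if i = 0 then b else a)"
  have d: "decreasing le s" unfolding decreasing_def s_def using ab refl by auto
  have i: "is_inf le (range s) a" unfolding is_inf_range s_def using ab refl
    by (metis One_nat_def Zero_not_Suc)
  have "is_inf le2 (range (\<lambda>i. F (s i))) (F a)" using c d i unfolding omega_cocont_def by blast
  then show ?thesis unfolding is_inf_range s_def by (metis (full_types))
qed

lemma inf_pointwise:
  "is_inf wle (range s) x \<longleftrightarrow> (\<forall>\<sigma>. is_inf nle (range (\<lambda>i. s i \<sigma>)) (x \<sigma>))"
proof
  assume h: "is_inf wle (range s) x"
  show "\<forall>\<sigma>. is_inf nle (range (\<lambda>i. s i \<sigma>)) (x \<sigma>)"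
  proof
    fix \<sigma>
    have lb: "\<forall>i. nle (x \<sigma>) (s i \<sigma>)" using h unfolding is_inf_range wle_def by blast
    have "nle y (x \<sigma>)" if y: "\<forall>i. nle y (s i \<sigma>)" for y
    proof -
      have "\<forall>i. wle (x(\<sigma> := y)) (s i)" using y h unfolding is_inf_range wle_def by auto
      then have "wle (x(\<sigma> := y)) x" using h unfolding is_inf_range by blast
      then show ?thesis unfolding wle_def by (metis fun_upd_same)
    qed
    then show "is_inf nle (range (\<lambda>i. s i \<sigma>)) (x \<sigma>)" using lb unfolding is_inf_range by blast
  qed
next
  assume "\<forall>\<sigma>. is_inf nle (range (\<lambda>i. s i \<sigma>)) (x \<sigma>)"
  then show "is_inf wle (range s) x" unfolding is_inf_range wle_def by blast
qed

lemma dec_pointwise: "decreasing wle s \<longleftrightarrow> (\<forall>\<sigma>. decreasing nle (\<lambda>i. s i \<sigma>))"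
  by (auto simp: decreasing_def wle_def)

lemma const_inf: "is_inf wle (range (\<lambda>i. c)) c" unfolding is_inf_range by (auto simp: wle_refl)
lemma const_dec: "decreasing wle (\<lambda>i. c)" unfolding decreasing_def by (auto simp: wle_refl)

lemma dec_map: "omega_cocont wle wle F \<Longrightarrow> decreasing wle s \<Longrightarrow> decreasing wle (\<lambda>i. F (s i))"
  unfolding decreasing_def using cocont_mono[of wle wle F] wle_refl by blast

lemma chain_guard: "is_inf wle (range s) x \<Longrightarrow> is_inf wle (range (\<lambda>i. guard P (s i))) (guard P x)"
  unfolding inf_pointwise guard_def by (auto simp: is_inf_def nle_refl)

lemma dec_guard: "decreasing wle s \<Longrightarrow> decreasing wle (\<lambda>i. guard P (s i))"
  unfolding decreasing_def wle_def guard_def by (auto simp: nle_refl)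

lemma chain_comp: "is_inf wle (range s) x \<Longrightarrow> is_inf wle (range (\<lambda>i \<sigma>. s i (g \<sigma>))) (\<lambda>\<sigma>. x (g \<sigma>))"
  unfolding inf_pointwise by simp

lemma dec_plus: "decreasing wle s \<Longrightarrow> decreasing wle t \<Longrightarrow> decreasing wle (\<lambda>i \<sigma>. s i \<sigma> + t i \<sigma>)"
  unfolding decreasing_def wle_def by (auto intro: nle_add)

lemma double_inf:
  assumes "\<And>n. is_inf wle (range (\<lambda>i. a n i)) (b n)"
    and "\<And>i. is_inf wle (range (\<lambda>n. a n i)) (c i)"
    and "is_inf wle (range c) z"
  shows "is_inf wle (range b) z"
  using assms unfolding is_inf_range by (meson wle_trans)

locale ocm =
  fixes act :: "'m::monoid_mult \<Rightarrow> 's::comm_monoid_add \<Rightarrow> 's"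
  assumes ocm: "omega_cocontinuous_module act"
begin

lemma nle_antisym: "nle (a::'s) b \<Longrightarrow> nle b a \<Longrightarrow> a = b"
  using ocm unfolding omega_cocontinuous_module_def by blast

lemma ntop_top: "nle a (ntop::'s)"
proof -
  obtain t :: 's where t: "\<forall>a. nle a t" using ocm unfolding omega_cocontinuous_module_def by blast
  have "ntop = t" unfolding ntop_def
    by (rule the_equality) (use t nle_antisym in auto)
  then show ?thesis using t by simp
qed

lemma wle_antisym: "wle (f::'a \<Rightarrow> 's) g \<Longrightarrow> wle g f \<Longrightarrow> f = g"
  unfolding wle_def by (auto intro: nle_antisym)

lemma wtop_top: "wle (f::'a \<Rightarrow> 's) wtop" by (simp add: wle_def wtop_def ntop_top)

lemma inf_unique: "is_inf wle A (x::'a \<Rightarrow> 's) \<Longrightarrow> is_inf wle A y \<Longrightarrow> x = y"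
  unfolding is_inf_def by (blast intro: wle_antisym)

lemma wchain_ex: assumes "decreasing wle (s :: nat \<Rightarrow> 'a \<Rightarrow> 's)" shows "\<exists>x. is_inf wle (range s) x"
proof -
  have ch: "\<forall>s::nat \<Rightarrow> 's. decreasing nle s \<longrightarrow> (\<exists>x. is_inf nle (range s) x)"
    using ocm unfolding omega_cocontinuous_module_def by blast
  have "\<forall>\<sigma>. \<exists>x. is_inf nle (range (\<lambda>i. s i \<sigma>)) x"
    using assms ch unfolding dec_pointwise by blast
  then obtain x where "\<forall>\<sigma>. is_inf nle (range (\<lambda>i. s i \<sigma>)) (x \<sigma>)" by metis
  then show ?thesis unfolding inf_pointwise by blast
qed

lemma plus_cont: "decreasing nle (s::nat \<Rightarrow> 's) \<Longrightarrow> decreasing nle t \<Longrightarrow>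
         is_inf nle (range s) x \<Longrightarrow> is_inf nle (range t) y \<Longrightarrow>
         is_inf nle (range (\<lambda>i. s i + t i)) (x + y)"
  using ocm unfolding omega_cocontinuous_module_def by blast

lemma act_cont: "omega_cocont nle nle (act v)"
  using ocm unfolding omega_cocontinuous_module_def by blast

lemma chain_plus:
  assumes "decreasing wle (s :: nat \<Rightarrow> 'a \<Rightarrow> 's)" "decreasing wle t" "is_inf wle (range s) x" "is_inf wle (range t) y"
  shows "is_inf wle (range (\<lambda>i \<sigma>. s i \<sigma> + t i \<sigma>)) (\<lambda>\<sigma>. x \<sigma> + y \<sigma>)"
  unfolding inf_pointwise
proof
  fix \<sigma>
  show "is_inf nle (range (\<lambda>i. s i \<sigma> + t i \<sigma>)) (x \<sigma> + y \<sigma>)"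
    apply (rule plus_cont)
    using assms unfolding inf_pointwise dec_pointwise by auto
qed

lemma chain_act:
  assumes "decreasing wle (s :: nat \<Rightarrow> 'a \<Rightarrow> 's)" "is_inf wle (range s) x"
  shows "is_inf wle (range (\<lambda>i \<sigma>. act v (s i \<sigma>))) (\<lambda>\<sigma>. act v (x \<sigma>))"
  unfolding inf_pointwise
proof
  fix \<sigma>
  have "decreasing nle (\<lambda>i. s i \<sigma>)" "is_inf nle (range (\<lambda>i. s i \<sigma>)) (x \<sigma>)"
    using assms unfolding inf_pointwise dec_pointwise by auto
  then show "is_inf nle (range (\<lambda>i. act v (s i \<sigma>))) (act v (x \<sigma>))"
    using act_cont[of v] unfolding omega_cocont_def by blast
qed

lemma kleene:
  assumes c: "omega_cocont wle wle (\<Phi> :: ('a \<Rightarrow> 's) \<Rightarrow> ('a \<Rightarrow> 's))"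
  shows "is_gfp wle \<Phi> (gfp_w \<Phi>) \<and> is_inf wle (range (\<lambda>i. (\<Phi> ^^ i) wtop)) (gfp_w \<Phi>)"
proof -
  define a where "a = (\<lambda>i. (\<Phi> ^^ i) wtop)"
  have mono: "wle (\<Phi> x) (\<Phi> y)" if "wle x y" for x y
    using cocont_mono[of wle wle \<Phi>] wle_refl c that by blast
  have step: "wle (a (Suc i)) (a i)" for i
    by (induction i) (auto simp: a_def wtop_top intro: mono)
  then have d: "decreasing wle a" unfolding decreasing_def by blast
  then obtain z where z: "is_inf wle (range a) z" using wchain_ex by blast
  have "is_inf wle (range (\<lambda>i. \<Phi> (a i))) (\<Phi> z)" using c d z unfolding omega_cocont_def by blast
  then have "is_inf wle (range (\<lambda>i. a (Suc i))) (\<Phi> z)" by (simp add: a_def)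
  then have "is_inf wle (range a) (\<Phi> z)" unfolding is_inf_range using step
    by (meson wle_trans)
  then have fp: "\<Phi> z = z" using z inf_unique by blast
  have below: "wle y z" if "\<Phi> y = y" for y
  proof -
    have "wle y (a i)" for i
    proof (induction i)
      case 0 then show ?case by (simp add: a_def wtop_top)
    next
      case (Suc i) then show ?case using mono[of y "a i"] that by (simp add: a_def)
    qed
    then show ?thesis using z unfolding is_inf_range by blast
  qed
  have g: "is_gfp wle \<Phi> z" unfolding is_gfp_def using fp below by blast
  have "gfp_w \<Phi> = z" unfolding gfp_w_def
    by (rule the_equality) (use g wle_antisym in \<open>auto simp: is_gfp_def\<close>)
  then show ?thesis using g z a_def by simp
qed

lemma char_cocont:
  fixes C :: "('v, 'val, 'm) wgcl"
  assumes c: "omega_cocont wle wle (wlp act C)"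
  shows "omega_cocont wle wle (wlp_char act P C g)"
  unfolding omega_cocont_def wlp_char_def
proof (intro allI impI)
  fix s :: "nat \<Rightarrow> ('v, 'val) state \<Rightarrow> 's" and x assume d: "decreasing wle s" and i: "is_inf wle (range s) x"
  have d1: "decreasing wle (\<lambda>n. guard P (wlp act C (s n)))" using dec_guard dec_map c d by blast
  have i1: "is_inf wle (range (\<lambda>n. guard P (wlp act C (s n)))) (guard P (wlp act C x))"
    using chain_guard c d i unfolding omega_cocont_def by blast
  show "is_inf wle (range (\<lambda>n \<sigma>. guard (\<lambda>\<tau>. \<not> P \<tau>) g \<sigma> + guard P (wlp act C (s n)) \<sigma>))
          (\<lambda>\<sigma>. guard (\<lambda>\<tau>. \<not> P \<tau>) g \<sigma> + guard P (wlp act C x) \<sigma>)"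
    using chain_plus[OF const_dec d1 const_inf i1] .
qed

lemma while_eq: "wlp act (While P C) f = gfp_w (wlp_char act P C f)"
  by (simp add: wlp_char_def[abs_def])

lemma while_cocont:
  fixes C :: "('v, 'val, 'm) wgcl"
  assumes c: "omega_cocont wle wle (wlp act C)"
  shows "omega_cocont wle wle (wlp act (While P C))"
  unfolding omega_cocont_def
proof (intro allI impI)
  fix f :: "nat \<Rightarrow> ('v, 'val) state \<Rightarrow> 's" and x assume d: "decreasing wle f" and i: "is_inf wle (range f) x"
  define \<Phi> where "\<Phi> = wlp_char act P C"
  have cc: "\<And>g. omega_cocont wle wle (\<Phi> g)" using char_cocont c \<Phi>_def by blast
  have claim: "decreasing wle (\<lambda>n. (\<Phi> (f n) ^^ i) wtop) \<and>
      is_inf wle (range (\<lambda>n. (\<Phi> (f n) ^^ i) wtop)) ((\<Phi> x ^^ i) wtop)" for i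
  proof (induction i)
    case 0 then show ?case by (auto simp: decreasing_def is_inf_def wle_refl)
  next
    case (Suc i)
    let ?A = "\<lambda>n. (\<Phi> (f n) ^^ i) wtop"
    have d1: "decreasing wle (\<lambda>n. guard P (wlp act C (?A n)))" using dec_guard dec_map c Suc by blast
    have i1: "is_inf wle (range (\<lambda>n. guard P (wlp act C (?A n)))) (guard P (wlp act C ((\<Phi> x ^^ i) wtop)))"
      using chain_guard c Suc unfolding omega_cocont_def by blast
    have d2: "decreasing wle (\<lambda>n. guard (\<lambda>\<tau>. \<not> P \<tau>) (f n))" using dec_guard d by blast
    have i2: "is_inf wle (range (\<lambda>n. guard (\<lambda>\<tau>. \<not> P \<tau>) (f n))) (guard (\<lambda>\<tau>. \<not> P \<tau>) x)"
      using chain_guard i by blast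
    show ?case using chain_plus[OF d2 d1 i2 i1] dec_plus[OF d2 d1]
      by (simp add: \<Phi>_def wlp_char_def[abs_def])
  qed
  show "is_inf wle (range (\<lambda>n. wlp act (While P C) (f n))) (wlp act (While P C) x)"
    unfolding while_eq \<Phi>_def[symmetric]
    by (rule double_inf[where a="\<lambda>n i. (\<Phi> (f n) ^^ i) wtop" and c="\<lambda>i. (\<Phi> x ^^ i) wtop"])
       (use kleene[OF cc] claim in auto)
qed

lemma cocont_wlp: "omega_cocont wle wle (wlp act (C :: ('v, 'val, 'm) wgcl))"
proof (induction C)
  case (Assign v E)
  have "is_inf wle (range (\<lambda>i \<sigma>. s i (\<sigma>(v := E \<sigma>)))) (\<lambda>\<sigma>. x (\<sigma>(v := E \<sigma>)))"
    if "is_inf wle (range s) x" for s and x :: "('v, 'val) state \<Rightarrow> 's"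
    using chain_comp[OF that, of "\<lambda>\<sigma>. \<sigma>(v := E \<sigma>)"] .
  then show ?case unfolding omega_cocont_def wlp.simps by blast
next
  case (Seq C1 C2)
  show ?case unfolding omega_cocont_def
  proof (intro allI impI)
    fix s :: "nat \<Rightarrow> ('v, 'val) state \<Rightarrow> 's" and x assume d: "decreasing wle s" and i: "is_inf wle (range s) x"
    have "is_inf wle (range (\<lambda>n. wlp act C2 (s n))) (wlp act C2 x)"
      using Seq d i unfolding omega_cocont_def by blast
    moreover have "decreasing wle (\<lambda>n. wlp act C2 (s n))" using dec_map Seq d by blast
    ultimately show "is_inf wle (range (\<lambda>n. wlp act (Seq C1 C2) (s n))) (wlp act (Seq C1 C2) x)"
      using Seq unfolding omega_cocont_def by simp
  qed
next
  case (Ite P C1 C2)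
  show ?case unfolding omega_cocont_def
  proof (intro allI impI)
    fix s :: "nat \<Rightarrow> ('v, 'val) state \<Rightarrow> 's" and x assume d: "decreasing wle s" and i: "is_inf wle (range s) x"
    have d1: "decreasing wle (\<lambda>n. guard P (wlp act C1 (s n)))" using dec_guard dec_map Ite d by blast
    have i1: "is_inf wle (range (\<lambda>n. guard P (wlp act C1 (s n)))) (guard P (wlp act C1 x))"
      using chain_guard Ite d i unfolding omega_cocont_def by blast
    have d2: "decreasing wle (\<lambda>n. guard (\<lambda>\<tau>. \<not> P \<tau>) (wlp act C2 (s n)))" using dec_guard dec_map Ite d by blast
    have i2: "is_inf wle (range (\<lambda>n. guard (\<lambda>\<tau>. \<not> P \<tau>) (wlp act C2 (s n)))) (guard (\<lambda>\<tau>. \<not> P \<tau>) (wlp act C2 x))"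
      using chain_guard Ite d i unfolding omega_cocont_def by blast
    show "is_inf wle (range (\<lambda>n. wlp act (Ite P C1 C2) (s n))) (wlp act (Ite P C1 C2) x)"
      using chain_plus[OF d1 d2 i1 i2] by simp
  qed
next
  case (Branch C1 C2)
  show ?case unfolding omega_cocont_def
  proof (intro allI impI)
    fix s :: "nat \<Rightarrow> ('v, 'val) state \<Rightarrow> 's" and x assume d: "decreasing wle s" and i: "is_inf wle (range s) x"
    have d1: "decreasing wle (\<lambda>n. wlp act C1 (s n))" using dec_map Branch d by blast
    have i1: "is_inf wle (range (\<lambda>n. wlp act C1 (s n))) (wlp act C1 x)"
      using Branch d i unfolding omega_cocont_def by blast
    have d2: "decreasing wle (\<lambda>n. wlp act C2 (s n))" using dec_map Branch d by blast
    have i2: "is_inf wle (range (\<lambda>n. wlp act C2 (s n))) (wlp act C2 x)"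
      using Branch d i unfolding omega_cocont_def by blast
    show "is_inf wle (range (\<lambda>n. wlp act (Branch C1 C2) (s n))) (wlp act (Branch C1 C2) x)"
      using chain_plus[OF d1 d2 i1 i2] by simp
  qed
next
  case (Weight a)
  show ?case unfolding omega_cocont_def wlp.simps by (intro allI impI chain_act)
next
  case (While P C)
  then show ?case using while_cocont by blast
qed

end

theorem mainTheorem4:
  fixes act :: "'m::monoid_mult \<Rightarrow> 's::comm_monoid_add \<Rightarrow> 's"
    and C :: "('v, 'val, 'm) wgcl"
  assumes "is_module act"
    and "omega_cocontinuous_module act"
  shows "omega_cocont wle wle (wlp act C)
    \<and> (\<forall>P f. is_gfp wle (wlp_char act P C f) (wlp act (While P C) f)
         \<and> is_inf wle (range (\<lambda>i. (wlp_char act P C f ^^ i) wtop)) (wlp act (While P C) f))"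
proof -
  interpret ocm act using assms(2) by unfold_locales
  have c: "omega_cocont wle wle (wlp act C)" by (rule cocont_wlp)
  show ?thesis unfolding while_eq using c kleene[OF char_cocont[OF c]] by blast
qed

end
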